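(* Let $G$ be a LEF-group, $R$ a ring, $A$ an $R$-module, and $\sigma,\tau\in CA_{R\text{-mod}}(G,A)$. (1) If $A$ is a Noetherian $R$-module and $\tau$ is reversible, then $\tau^{-1}\in CA_{R\text{-mod}}(G,A)$. (2) If $\sigma\circ\tau=\mathrm{Id}$, then $\tau\circ\sigma=\mathrm{Id}$ in each of the following cases: (a) $A$ is a Noetherian $R$-module or an Artinian $R$-module; (b) $R$ is commutative and $A$ is a finitely generated $R$-module.
   Context: A group $G$ is LEF if every finite subset $S\subset G$ admits an injective map $\varphi\colon S\to H$ into some finite group $H$ with $\varphi(ab)=\varphi(a)\varphi(b)$ whenever $a,b,ab\in S$. $G$ acts on $A^G$ by $(gc)(h)=c(g^{-1}h)$; a cellular automaton is a map $\tau\colon A^G\to A^G$ with $(\tau(c))(g)=\mu((g^{-1}c)|_M)$ for some finite $M\subset G$ and map $\mu\colon A^M\to A$; it is reversible if it is bijective and its inverse is a cellular automaton. $CA_{R\text{-mod}}(G,A)$ is the set of cellular automata $\tau\colon A^G\to A^G$ admitting, for some finite memory set $M\subset G$, a local defining map $\mu\colon A^M\to A$ which is a homomorphism of $R$-modules. *)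

theory Defs
  imports "HOL-Algebra.Group"
begin

text \<open>The group G is a type of class group_add (operation written +, not necessarily
commutative; inverse is uminus).
A is a type of class ab_group_add together with a scalar multiplication by the
unital ring 'r (class ring_1, not necessarily commutative).\<close>

definition LEF :: "'g::group_add itself \<Rightarrow> bool" where
  "LEF _ \<longleftrightarrow> (\<forall>S::'g set. finite S \<longrightarrow>
     (\<exists>(H::nat monoid) (\<phi>::'g \<Rightarrow> nat). group H \<and> finite (carrier H) \<and>
        \<phi> ` S \<subseteq> carrier H \<and> inj_on \<phi> S \<and>
        (\<forall>a\<in>S. \<forall>b\<in>S. a + b \<in> S \<longrightarrow> \<phi> (a + b) = \<phi> a \<otimes>\<^bsub>H\<^esub> \<phi> b)))"

definition shift :: "'g::group_add \<Rightarrow> ('g \<Rightarrow> 'a) \<Rightarrow> ('g \<Rightarrow> 'a)" where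
  "shift g c = (\<lambda>h. c (- g + h))"

text \<open>Elements of A^M are represented as functions 'g => 'a vanishing outside M.\<close>
definition restr :: "'g set \<Rightarrow> ('g \<Rightarrow> 'a::zero) \<Rightarrow> ('g \<Rightarrow> 'a)" where
  "restr M c = (\<lambda>h. if h \<in> M then c h else 0)"

definition supported_in :: "'g set \<Rightarrow> ('g \<Rightarrow> 'a::zero) \<Rightarrow> bool" where
  "supported_in M x \<longleftrightarrow> (\<forall>h. h \<notin> M \<longrightarrow> x h = 0)"

definition is_CA :: "(('g::group_add \<Rightarrow> 'a::zero) \<Rightarrow> ('g \<Rightarrow> 'a)) \<Rightarrow> bool" where
  "is_CA \<tau> \<longleftrightarrow> (\<exists>M (\<mu>::('g \<Rightarrow> 'a) \<Rightarrow> 'a). finite M \<and>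
      (\<forall>c g. \<tau> c g = \<mu> (restr M (shift (- g) c))))"

definition reversible :: "(('g::group_add \<Rightarrow> 'a::zero) \<Rightarrow> ('g \<Rightarrow> 'a)) \<Rightarrow> bool" where
  "reversible \<tau> \<longleftrightarrow> is_CA \<tau> \<and> bij \<tau> \<and> is_CA (inv_into UNIV \<tau>)"

definition rmodule :: "('r::ring_1 \<Rightarrow> 'a::ab_group_add \<Rightarrow> 'a) \<Rightarrow> bool" where
  "rmodule smul \<longleftrightarrow>
     (\<forall>r x y. smul r (x + y) = smul r x + smul r y) \<and>
     (\<forall>r s x. smul (r + s) x = smul r x + smul s x) \<and>
     (\<forall>r s x. smul (r * s) x = smul r (smul s x)) \<and>
     (\<forall>x. smul 1 x = x)"

definition CA_Rmod :: "('r::ring_1 \<Rightarrow> 'a::ab_group_add \<Rightarrow> 'a) \<Rightarrow>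
    (('g::group_add \<Rightarrow> 'a) \<Rightarrow> ('g \<Rightarrow> 'a)) \<Rightarrow> bool" where
  "CA_Rmod smul \<tau> \<longleftrightarrow> (\<exists>M (\<mu>::('g \<Rightarrow> 'a) \<Rightarrow> 'a). finite M \<and>
      (\<forall>c g. \<tau> c g = \<mu> (restr M (shift (- g) c))) \<and>
      (\<forall>x y. supported_in M x \<longrightarrow> supported_in M y \<longrightarrow>
          \<mu> (\<lambda>h. x h + y h) = \<mu> x + \<mu> y) \<and>
      (\<forall>r x. supported_in M x \<longrightarrow> \<mu> (\<lambda>h. smul r (x h)) = smul r (\<mu> x)))"

definition submodule :: "('r::ring_1 \<Rightarrow> 'a::ab_group_add \<Rightarrow> 'a) \<Rightarrow> 'a set \<Rightarrow> bool" where
  "submodule smul N \<longleftrightarrow> 0 \<in> N \<and> (\<forall>x\<in>N. \<forall>y\<in>N. x + y \<in> N) \<and>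
     (\<forall>r. \<forall>x\<in>N. smul r x \<in> N)"

definition noetherian_module :: "('r::ring_1 \<Rightarrow> 'a::ab_group_add \<Rightarrow> 'a) \<Rightarrow> bool" where
  "noetherian_module smul \<longleftrightarrow> (\<forall>N :: nat \<Rightarrow> 'a set.
     (\<forall>n. submodule smul (N n)) \<and> (\<forall>n. N n \<subseteq> N (Suc n)) \<longrightarrow>
     (\<exists>m. \<forall>n\<ge>m. N n = N m))"

definition artinian_module :: "('r::ring_1 \<Rightarrow> 'a::ab_group_add \<Rightarrow> 'a) \<Rightarrow> bool" where
  "artinian_module smul \<longleftrightarrow> (\<forall>N :: nat \<Rightarrow> 'a set.
     (\<forall>n. submodule smul (N n)) \<and> (\<forall>n. N (Suc n) \<subseteq> N n) \<longrightarrow>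
     (\<exists>m. \<forall>n\<ge>m. N n = N m))"

definition mspan :: "('r::ring_1 \<Rightarrow> 'a::ab_group_add \<Rightarrow> 'a) \<Rightarrow> 'a set \<Rightarrow> 'a set" where
  "mspan smul S = \<Inter>{N. submodule smul N \<and> S \<subseteq> N}"

definition fin_gen_module :: "('r::ring_1 \<Rightarrow> 'a::ab_group_add \<Rightarrow> 'a) \<Rightarrow> bool" where
  "fin_gen_module smul \<longleftrightarrow> (\<exists>S. finite S \<and> mspan smul S = UNIV)"

end

theory Submission
  imports Defs "HOL-Library.Function_Algebras"
begin


lemma rm_simps:
  assumes "rmodule sm"
  shows "sm r (x + y) = sm r x + sm r y" "sm (r + s) x = sm r x + sm s x"
    "sm (r * s) x = sm r (sm s x)" "sm 1 x = x"
  using assms unfolding rmodule_def by auto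

lemma rm_zero1: assumes "rmodule sm" shows "sm r 0 = 0"
proof -
  have "sm r (0 + 0) = sm r 0 + sm r 0" using rm_simps[OF assms] by blast
  then show ?thesis by simp
qed

lemma rm_zero2: assumes "rmodule sm" shows "sm 0 x = 0"
proof -
  have "sm (0 + 0) x = sm 0 x + sm 0 x" using rm_simps[OF assms] by blast
  then show ?thesis by simp
qed

lemma rm_neg: assumes "rmodule sm" shows "sm (-1) x = - x"
proof -
  have "sm (1 + -1) x = sm 1 x + sm (-1) x" using rm_simps[OF assms] by blast
  then have "0 = x + sm (-1) x" using rm_zero2[OF assms] rm_simps(4)[OF assms] by simp
  then show ?thesis by (simp add: eq_neg_iff_add_eq_0 add.commute)
qed

lemma submod_diff: assumes "rmodule sm" "submodule sm N" "x \<in> N" "y \<in> N"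
  shows "x - y \<in> N"
proof -
  have "sm (-1) y \<in> N" using assms unfolding submodule_def by blast
  then have "x + sm (-1) y \<in> N" using assms unfolding submodule_def by blast
  then show ?thesis using rm_neg[OF assms(1)] by simp
qed

definition lin :: "('r::ring_1 \<Rightarrow> 'v::ab_group_add \<Rightarrow> 'v) \<Rightarrow> ('v \<Rightarrow> 'v) \<Rightarrow> bool" where
  "lin sm f \<longleftrightarrow> (\<forall>x y. f (x + y) = f x + f y) \<and> (\<forall>r x. f (sm r x) = sm r (f x))"

lemma lin_add: "lin sm f \<Longrightarrow> f (x + y) = f x + f y" unfolding lin_def by blast
lemma lin_sm: "lin sm f \<Longrightarrow> f (sm r x) = sm r (f x)" unfolding lin_def by blast
lemma lin_zero: "lin sm f \<Longrightarrow> f 0 = 0"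
  using lin_add[of sm f 0 0] by simp
lemma lin_diff: "lin sm f \<Longrightarrow> f (x - y) = f x - f y"
  using lin_add[of sm f "x - y" y] by (simp add: algebra_simps)

lemma lin_comp: "lin sm f \<Longrightarrow> lin sm g \<Longrightarrow> lin sm (f \<circ> g)"
  unfolding lin_def by simp

lemma lin_pow: "lin sm f \<Longrightarrow> lin sm (f ^^ n)"
  by (induction n) (auto simp: lin_def)

definition noeth_on :: "('r::ring_1 \<Rightarrow> 'v::ab_group_add \<Rightarrow> 'v) \<Rightarrow> 'v set \<Rightarrow> bool" where
  "noeth_on sm V \<longleftrightarrow> (\<forall>N :: nat \<Rightarrow> 'v set.
     (\<forall>n. submodule sm (N n) \<and> N n \<subseteq> V) \<and> (\<forall>n. N n \<subseteq> N (Suc n)) \<longrightarrow>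
     (\<exists>m. \<forall>n\<ge>m. N n = N m))"

definition artin_on :: "('r::ring_1 \<Rightarrow> 'v::ab_group_add \<Rightarrow> 'v) \<Rightarrow> 'v set \<Rightarrow> bool" where
  "artin_on sm V \<longleftrightarrow> (\<forall>N :: nat \<Rightarrow> 'v set.
     (\<forall>n. submodule sm (N n) \<and> N n \<subseteq> V) \<and> (\<forall>n. N (Suc n) \<subseteq> N n) \<longrightarrow>
     (\<exists>m. \<forall>n\<ge>m. N n = N m))"

lemma pow_inv: assumes "\<forall>x\<in>V. g (f x) = x" "f ` V \<subseteq> V" "x \<in> V"
  shows "(g ^^ n) ((f ^^ n) x) = x \<and> (f ^^ n) x \<in> V"
  using assms(3)
proof (induction n arbitrary: x)
  case 0 then show ?case by simp
next
  case (Suc n)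
  have "f x \<in> V" using Suc assms by blast
  then have "(g ^^ n) ((f ^^ n) (f x)) = f x \<and> (f ^^ n) (f x) \<in> V" using Suc by blast
  moreover have "(f ^^ Suc n) x = (f ^^ n) (f x)" by (simp add: funpow_Suc_right del: funpow.simps)
  ultimately show ?case using assms Suc.prems by simp
qed

lemma pow_maps: "f ` V \<subseteq> V \<Longrightarrow> x \<in> V \<Longrightarrow> (f ^^ n) x \<in> V"
  by (induction n) (simp_all add: image_subset_iff)

lemma submod_lin_image: assumes "rmodule sm" "submodule sm V" "lin sm f"
  shows "submodule sm (f ` V)"
proof -
  have V: "0 \<in> V" "\<And>x y. x \<in> V \<Longrightarrow> y \<in> V \<Longrightarrow> x + y \<in> V"
    "\<And>r x. x \<in> V \<Longrightarrow> sm r x \<in> V" using assms(2) unfolding submodule_def by auto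
  have "0 \<in> f ` V" using V(1) lin_zero[OF assms(3)] by (metis image_eqI)
  moreover have "x + y \<in> f ` V" if xy: "x \<in> f ` V" "y \<in> f ` V" for x y
  proof -
    obtain a b where "a \<in> V" "b \<in> V" "x = f a" "y = f b" using xy by blast
    then show ?thesis using V(2) lin_add[OF assms(3), of a b] by (metis image_eqI)
  qed
  moreover have "sm r x \<in> f ` V" if xx: "x \<in> f ` V" for r x
  proof -
    obtain a where "a \<in> V" "x = f a" using xx by blast
    then show ?thesis using V(3) lin_sm[OF assms(3), of r a] by (metis image_eqI)
  qed
  ultimately show ?thesis unfolding submodule_def by blast
qed

lemma noeth_core:
  assumes rm: "rmodule sm" and V: "submodule sm V" and N: "noeth_on sm V"
    and f: "lin sm f" and g: "lin sm g" and fV: "f ` V \<subseteq> V" and gV: "g ` V \<subseteq> V"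
    and gf: "\<forall>x\<in>V. g (f x) = x"
  shows "\<forall>x\<in>V. f (g x) = x"
proof -
  define K where "K n = {x\<in>V. (g ^^ n) x = 0}" for n
  have "\<forall>n. submodule sm (K n) \<and> K n \<subseteq> V"
  proof
    fix n
    have l: "lin sm (g ^^ n)" using lin_pow[OF g] .
    show "submodule sm (K n) \<and> K n \<subseteq> V"
      using V rm_zero1[OF rm] unfolding K_def submodule_def
      by (auto simp: lin_zero[OF l] lin_add[OF l] lin_sm[OF l])
  qed
  moreover have "\<forall>n. K n \<subseteq> K (Suc n)"
    unfolding K_def using lin_zero[OF g] by auto
  ultimately obtain m where m: "\<forall>n\<ge>m. K n = K m" using N unfolding noeth_on_def by blast
  have inj0: "x = 0" if "x \<in> V" "g x = 0" for x
  proof -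
    define y where "y = (f ^^ m) x"
    have y: "(g ^^ m) y = x" "y \<in> V" using pow_inv[OF gf fV that(1)] y_def by auto
    have "(g ^^ Suc m) y = 0" using y that by simp
    then have "y \<in> K (Suc m)" using y unfolding K_def by blast
    moreover have "K (Suc m) = K m" by (rule m[rule_format]) simp
    ultimately have "y \<in> K m" by simp
    then have "(g ^^ m) y = 0" by (simp add: K_def)
    then show ?thesis using y(1) by simp
  qed
  show ?thesis
  proof
    fix x assume x: "x \<in> V"
    have "f (g x) \<in> V" using x fV gV by blast
    have gx: "g x \<in> V" using x gV by blast
    have "g (f (g x) - x) = 0" using gf gx by (simp add: lin_diff[OF g])
    moreover have "f (g x) - x \<in> V" using submod_diff[OF rm V] x \<open>f (g x) \<in> V\<close> by blast
    ultimately have "f (g x) - x = 0" using inj0 by blast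
    then show "f (g x) = x" by simp
  qed
qed

lemma artin_core:
  assumes rm: "rmodule sm" and V: "submodule sm V" and A: "artin_on sm V"
    and f: "lin sm f" and g: "lin sm g" and fV: "f ` V \<subseteq> V" and gV: "g ` V \<subseteq> V"
    and gf: "\<forall>x\<in>V. g (f x) = x"
  shows "\<forall>x\<in>V. f (g x) = x"
proof -
  define I where "I n = (f ^^ n) ` V" for n
  have "\<forall>n. submodule sm (I n) \<and> I n \<subseteq> V"
    unfolding I_def using submod_lin_image[OF rm V lin_pow[OF f]] pow_maps[OF fV] by blast
  moreover have "\<forall>n. I (Suc n) \<subseteq> I n"
    unfolding I_def using fV by (auto simp: funpow_Suc_right simp del: funpow.simps)
  ultimately obtain m where m: "\<forall>n\<ge>m. I n = I m" using A unfolding artin_on_def by blast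
  have injm: "inj_on (f ^^ m) V"
    by (rule inj_on_inverseI[where g="g ^^ m"]) (use pow_inv[OF gf fV] in blast)
  show ?thesis
  proof
    fix x assume x: "x \<in> V"
    have "I (Suc m) = I m" by (rule m[rule_format]) simp
    moreover have "(f ^^ m) x \<in> I m" using x unfolding I_def by blast
    ultimately have "(f ^^ m) x \<in> I (Suc m)" by simp
    then obtain y where y: "y \<in> V" "(f ^^ m) x = (f ^^ m) (f y)"
      unfolding I_def by (auto simp: funpow_Suc_right simp del: funpow.simps)
    have "x = f y" using injm y x fV by (auto dest: inj_onD)
    then show "f (g x) = x" using gf y by simp
  qed
qed




definition VK :: "nat set \<Rightarrow> (nat \<Rightarrow> 'a::zero) set" where
  "VK K = {x. \<forall>h. h \<notin> K \<longrightarrow> x h = 0}"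

definition smV :: "('r \<Rightarrow> 'a \<Rightarrow> 'a) \<Rightarrow> 'r \<Rightarrow> ('k \<Rightarrow> 'a) \<Rightarrow> ('k \<Rightarrow> 'a)" where
  "smV sm r x = (\<lambda>h. sm r (x h))"

lemma rmodule_smV: "rmodule sm \<Longrightarrow> rmodule (smV sm)"
  unfolding rmodule_def smV_def by (auto simp: fun_eq_iff)

lemma submodule_VK: "rmodule sm \<Longrightarrow> submodule (smV sm) (VK K)"
  unfolding submodule_def VK_def smV_def by (auto simp: rm_zero1)

lemma submodule_Int: "submodule sm A \<Longrightarrow> submodule sm B \<Longrightarrow> submodule sm (A \<inter> B)"
  unfolding submodule_def by auto

lemma submodule_proj: assumes "rmodule sm" "submodule (smV sm) N"
  shows "submodule sm ((\<lambda>x. x k) ` N)"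
proof -
  have N: "0 \<in> N" "\<And>x y. x \<in> N \<Longrightarrow> y \<in> N \<Longrightarrow> x + y \<in> N"
    "\<And>r x. x \<in> N \<Longrightarrow> smV sm r x \<in> N" using assms(2) unfolding submodule_def by auto
  have "0 \<in> (\<lambda>x. x k) ` N" by (rule image_eqI[where x=0]) (simp_all add: N(1))
  moreover have "a + b \<in> (\<lambda>x. x k) ` N" if ab: "a \<in> (\<lambda>x. x k) ` N" "b \<in> (\<lambda>x. x k) ` N" for a b
  proof -
    obtain x y where "x \<in> N" "y \<in> N" "a = x k" "b = y k" using ab by blast
    then show ?thesis by (intro image_eqI[where x="x+y"]) (simp_all add: N(2))
  qed
  moreover have "sm r a \<in> (\<lambda>x. x k) ` N" if aa: "a \<in> (\<lambda>x. x k) ` N" for r a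
  proof -
    obtain x where "x \<in> N" "a = x k" using aa by blast
    then show ?thesis by (intro image_eqI[where x="smV sm r x"]) (simp_all add: N(3)[unfolded smV_def] smV_def)
  qed
  ultimately show ?thesis unfolding submodule_def by blast
qed

lemma ext_eq:
  assumes rm: "rmodule sm" and N1: "submodule (smV sm) N1" and N2: "submodule (smV sm) N2"
    and sub: "N1 \<subseteq> N2" and N2V: "N2 \<subseteq> VK (insert k K)"
    and P: "N2 \<inter> VK K \<subseteq> N1" and Q: "(\<lambda>x. x k) ` N2 \<subseteq> (\<lambda>x. x k) ` N1"
  shows "N2 \<subseteq> N1"
proof
  fix x assume x: "x \<in> N2"
  have "x k \<in> (\<lambda>x. x k) ` N1" using Q x by blast
  then obtain y where y: "y \<in> N1" "y k = x k" by force
  have yN2: "y \<in> N2" using y sub by blast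
  have d: "x - y \<in> N2" using submod_diff[OF rmodule_smV[OF rm] N2 x yN2] .
  have "x - y \<in> VK K"
  proof -
    have "x \<in> VK (insert k K)" "y \<in> VK (insert k K)" using x yN2 N2V by auto
    then show ?thesis using y(2) unfolding VK_def by (auto; metis)
  qed
  then have "x - y \<in> N1" using d P by blast
  then have "(x - y) + y \<in> N1" using y(1) N1 unfolding submodule_def by blast
  then show "x \<in> N1" by simp
qed

lemma noeth_VK:
  assumes rm: "rmodule sm" and noe: "noetherian_module sm" and fin: "finite K"
  shows "noeth_on (smV sm) (VK K)"
  using fin
proof (induction K rule: finite_induct)
  case empty
  show ?case unfolding noeth_on_def
  proof (intro allI impI)
    fix N
    assume a0: "(\<forall>n. submodule (smV sm) (N n) \<and> N n \<subseteq> VK {}) \<and> (\<forall>n. N n \<subseteq> N (Suc n))"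
    have "N n = {0}" for n
    proof -
      have "submodule (smV sm) (N n)" "N n \<subseteq> VK {}" using a0 by blast+
      moreover have "VK {} = {0}" unfolding VK_def by (auto simp: fun_eq_iff)
      ultimately show ?thesis unfolding submodule_def by blast
    qed
    then show "\<exists>m. \<forall>n\<ge>m. N n = N m" by auto
  qed
next
  case (insert k K)
  show ?case unfolding noeth_on_def
  proof (intro allI impI)
    fix N
    assume a: "(\<forall>n. submodule (smV sm) (N n) \<and> N n \<subseteq> VK (insert k K)) \<and> (\<forall>n. N n \<subseteq> N (Suc n))"
    define P where "P n = N n \<inter> VK K" for n
    define Q where "Q n = (\<lambda>x. x k) ` N n" for n
    have "\<forall>n. submodule (smV sm) (P n) \<and> P n \<subseteq> VK K"
    proof
      fix n
      have "submodule (smV sm) (N n)" using a by blast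
      then show "submodule (smV sm) (P n) \<and> P n \<subseteq> VK K"
        unfolding P_def using submodule_Int submodule_VK[OF rm, of K] by blast
    qed
    moreover have "\<forall>n. P n \<subseteq> P (Suc n)" unfolding P_def using a by blast
    ultimately obtain m1 where m1: "\<forall>n\<ge>m1. P n = P m1" using insert.IH unfolding noeth_on_def by blast
    have "\<forall>n. submodule sm (Q n)"
    proof
      fix n
      have "submodule (smV sm) (N n)" using a by blast
      then show "submodule sm (Q n)" unfolding Q_def by (rule submodule_proj[OF rm])
    qed
    moreover have "\<forall>n. Q n \<subseteq> Q (Suc n)" unfolding Q_def using a by blast
    ultimately obtain m2 where m2: "\<forall>n\<ge>m2. Q n = Q m2" using noe unfolding noetherian_module_def by blast
    have mono: "N i \<subseteq> N j" if "i \<le> j" for i j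
      using lift_Suc_mono_le[of N, OF _ that] a by blast
    show "\<exists>m. \<forall>n\<ge>m. N n = N m"
    proof (intro exI allI impI)
      fix n assume n: "max m1 m2 \<le> n"
      have s: "N (max m1 m2) \<subseteq> N n" using mono n by blast
      have pe: "P n = P (max m1 m2)" using m1 n
        by (metis (no_types, lifting) max.bounded_iff max.cobounded1)
      have qe: "Q n = Q (max m1 m2)" using m2 n
        by (metis (no_types, lifting) max.bounded_iff max.cobounded2)
      have "N n \<subseteq> N (max m1 m2)"
        apply (rule ext_eq[OF rm _ _ s, of k K])
        using a pe qe unfolding P_def Q_def by auto
      then show "N n = N (max m1 m2)" using s by blast
    qed
  qed
qed

lemma artin_VK:
  assumes rm: "rmodule sm" and art: "artinian_module sm" and fin: "finite K"
  shows "artin_on (smV sm) (VK K)"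
  using fin
proof (induction K rule: finite_induct)
  case empty
  show ?case unfolding artin_on_def
  proof (intro allI impI)
    fix N
    assume a0: "(\<forall>n. submodule (smV sm) (N n) \<and> N n \<subseteq> VK {}) \<and> (\<forall>n. N (Suc n) \<subseteq> N n)"
    have "N n = {0}" for n
    proof -
      have "submodule (smV sm) (N n)" "N n \<subseteq> VK {}" using a0 by blast+
      moreover have "VK {} = {0}" unfolding VK_def by (auto simp: fun_eq_iff)
      ultimately show ?thesis unfolding submodule_def by blast
    qed
    then show "\<exists>m. \<forall>n\<ge>m. N n = N m" by auto
  qed
next
  case (insert k K)
  show ?case unfolding artin_on_def
  proof (intro allI impI)
    fix N
    assume a: "(\<forall>n. submodule (smV sm) (N n) \<and> N n \<subseteq> VK (insert k K)) \<and> (\<forall>n. N (Suc n) \<subseteq> N n)"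
    define P where "P n = N n \<inter> VK K" for n
    define Q where "Q n = (\<lambda>x. x k) ` N n" for n
    have "\<forall>n. submodule (smV sm) (P n) \<and> P n \<subseteq> VK K"
    proof
      fix n
      have "submodule (smV sm) (N n)" using a by blast
      then show "submodule (smV sm) (P n) \<and> P n \<subseteq> VK K"
        unfolding P_def using submodule_Int submodule_VK[OF rm, of K] by blast
    qed
    moreover have "\<forall>n. P (Suc n) \<subseteq> P n" unfolding P_def using a by blast
    ultimately obtain m1 where m1: "\<forall>n\<ge>m1. P n = P m1" using insert.IH unfolding artin_on_def by blast
    have "\<forall>n. submodule sm (Q n)"
    proof
      fix n
      have "submodule (smV sm) (N n)" using a by blast
      then show "submodule sm (Q n)" unfolding Q_def by (rule submodule_proj[OF rm])
    qed
    moreover have "\<forall>n. Q (Suc n) \<subseteq> Q n" unfolding Q_def using a by blast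
    ultimately obtain m2 where m2: "\<forall>n\<ge>m2. Q n = Q m2" using art unfolding artinian_module_def by blast
    have mono: "N j \<subseteq> N i" if "i \<le> j" for i j
      using lift_Suc_antimono_le[of N, OF _ that] a by blast
    show "\<exists>m. \<forall>n\<ge>m. N n = N m"
    proof (intro exI allI impI)
      fix n assume n: "max m1 m2 \<le> n"
      have s: "N n \<subseteq> N (max m1 m2)" using mono n by blast
      have pe: "P n = P (max m1 m2)" using m1 n
        by (metis (no_types, lifting) max.bounded_iff max.cobounded1)
      have qe: "Q n = Q (max m1 m2)" using m2 n
        by (metis (no_types, lifting) max.bounded_iff max.cobounded2)
      have "N (max m1 m2) \<subseteq> N n"
        apply (rule ext_eq[OF rm _ _ s, of k K])
        using a pe qe unfolding P_def Q_def by auto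
      then show "N n = N (max m1 m2)" using s by blast
    qed
  qed
qed



inductive_set Eops :: "('r::ring_1 \<Rightarrow> 'v::ab_group_add \<Rightarrow> 'v) \<Rightarrow> ('v \<Rightarrow> 'v) \<Rightarrow> ('v \<Rightarrow> 'v) set"
  for sm g where
  Esm: "sm r \<in> Eops sm g"
| Eg: "g \<in> Eops sm g"
| Eadd: "a \<in> Eops sm g \<Longrightarrow> b \<in> Eops sm g \<Longrightarrow> (\<lambda>x. a x + b x) \<in> Eops sm g"
| Ecomp: "a \<in> Eops sm g \<Longrightarrow> b \<in> Eops sm g \<Longrightarrow> a \<circ> b \<in> Eops sm g"

lemma E_eq: "a \<in> Eops sm g \<Longrightarrow> (\<And>x. f x = a x) \<Longrightarrow> f \<in> Eops sm g"
proof -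
  assume "a \<in> Eops sm g" "\<And>x. f x = a x"
  moreover have "f = a" using \<open>\<And>x. f x = a x\<close> by (rule ext)
  ultimately show ?thesis by simp
qed

lemma lin_smr:
  fixes sm :: "'r::ring_1 \<Rightarrow> 'v::ab_group_add \<Rightarrow> 'v"
  assumes rm: "rmodule sm" and comm: "\<forall>r s::'r::ring_1. r * s = s * r"
  shows "lin sm (sm (r::'r::ring_1))"
proof -
  have "sm r (sm s x) = sm s (sm r x)" for s x
  proof -
    have "sm r (sm s x) = sm (r * s) x" using rm_simps(3)[OF rm] by simp
    also have "\<dots> = sm (s * r) x" using comm by simp
    also have "\<dots> = sm s (sm r x)" using rm_simps(3)[OF rm] by simp
    finally show ?thesis .
  qed
  then show ?thesis unfolding lin_def using rm_simps(1)[OF rm] by blast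
qed

lemma E_lin:
  fixes sm :: "'r::ring_1 \<Rightarrow> 'v::ab_group_add \<Rightarrow> 'v"
  assumes rm: "rmodule sm" and comm: "\<forall>r s::'r::ring_1. r * s = s * r" and g: "lin sm g"
  shows "a \<in> Eops sm g \<Longrightarrow> lin sm a"
proof (induction rule: Eops.induct)
  case (Esm r) show ?case using lin_smr[OF rm comm] .
next
  case Eg show ?case using g .
next
  case (Eadd a b) then show ?case unfolding lin_def by (simp add: algebra_simps rm_simps(1)[OF rm])
next
  case (Ecomp a b) then show ?case using lin_comp by blast
qed

lemma E_g:
  fixes sm :: "'r::ring_1 \<Rightarrow> 'v::ab_group_add \<Rightarrow> 'v"
  assumes rm: "rmodule sm" and comm: "\<forall>r s::'r::ring_1. r * s = s * r" and g: "lin sm g"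
  shows "a \<in> Eops sm g \<Longrightarrow> a (g x) = g (a x)"
proof (induction arbitrary: x rule: Eops.induct)
  case (Esm r) show ?case using lin_sm[OF g] by simp
next
  case Eg show ?case by simp
next
  case (Eadd a b) then show ?case using lin_add[OF g] by simp
next
  case (Ecomp a b) then show ?case by simp
qed

lemma E_comm:
  fixes sm :: "'r::ring_1 \<Rightarrow> 'v::ab_group_add \<Rightarrow> 'v"
  assumes rm: "rmodule sm" and comm: "\<forall>r s::'r::ring_1. r * s = s * r" and g: "lin sm g"
    and a: "a \<in> Eops sm g"
  shows "b \<in> Eops sm g \<Longrightarrow> a (b x) = b (a x)"
proof (induction arbitrary: x rule: Eops.induct)
  case (Esm r) show ?case using lin_sm[OF E_lin[OF rm comm g a]] by simp
next
  case Eg show ?case using E_g[OF rm comm g a] by simp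
next
  case (Eadd b1 b2) then show ?case using lin_add[OF E_lin[OF rm comm g a]] by simp
next
  case (Ecomp b1 b2) then show ?case by simp
qed

inductive_set Espan :: "('r::ring_1 \<Rightarrow> 'v::ab_group_add \<Rightarrow> 'v) \<Rightarrow> ('v \<Rightarrow> 'v) \<Rightarrow> 'v set \<Rightarrow> 'v set"
  for sm g Y where
  S0: "0 \<in> Espan sm g Y"
| Sb: "y \<in> Y \<Longrightarrow> y \<in> Espan sm g Y"
| Sadd: "u \<in> Espan sm g Y \<Longrightarrow> v \<in> Espan sm g Y \<Longrightarrow> u + v \<in> Espan sm g Y"
| Sapp: "a \<in> Eops sm g \<Longrightarrow> u \<in> Espan sm g Y \<Longrightarrow> a u \<in> Espan sm g Y"

lemma Espan_submod: "submodule sm (Espan sm g Y)"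
  unfolding submodule_def
  using Espan.S0 Espan.Sadd Espan.Sapp[OF Eops.Esm] by blast

lemma Espan_empty:
  fixes sm :: "'r::ring_1 \<Rightarrow> 'v::ab_group_add \<Rightarrow> 'v"
  assumes rm: "rmodule sm" and comm: "\<forall>r s::'r::ring_1. r * s = s * r" and g: "lin sm g"
  shows "u \<in> Espan sm g {} \<Longrightarrow> u = (0::'v::ab_group_add)"
proof (induction rule: Espan.induct)
  case (Sapp a u) then show ?case using lin_zero[OF E_lin[OF rm comm g]] by simp
qed auto

lemma Espan_decomp:
  fixes sm :: "'r::ring_1 \<Rightarrow> 'v::ab_group_add \<Rightarrow> 'v"
  assumes rm: "rmodule sm" and comm: "\<forall>r s::'r::ring_1. r * s = s * r" and g: "lin sm g"
  shows "w \<in> Espan sm g (insert y Z) \<Longrightarrow> \<exists>c\<in>Eops sm g. \<exists>z\<in>Espan sm g Z. w = c y + z"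
proof (induction rule: Espan.induct)
  case S0
  have "0 = sm 0 y + 0" using rm_zero2[OF rm] by simp
  then show ?case by (intro bexI[where x="sm 0"] bexI[where x=0] Eops.Esm Espan.S0)
next
  case (Sb w)
  then show ?case
  proof
    assume "w = y"
    then have "w = sm 1 y + 0" using rm_simps(4)[OF rm] by simp
    then show ?thesis by (intro bexI[where x="sm 1"] bexI[where x=0] Eops.Esm Espan.S0)
  next
    assume "w \<in> Z"
    then have "w = sm 0 y + w" using rm_zero2[OF rm] by simp
    then show ?thesis using \<open>w \<in> Z\<close> by (intro bexI[where x="sm 0"] bexI[where x=w] Eops.Esm Espan.Sb)
  qed
next
  case (Sadd u v)
  then obtain c1 z1 c2 z2 where h: "c1 \<in> Eops sm g" "z1 \<in> Espan sm g Z" "u = c1 y + z1"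
    "c2 \<in> Eops sm g" "z2 \<in> Espan sm g Z" "v = c2 y + z2" by blast
  have "u + v = (\<lambda>x. c1 x + c2 x) y + (z1 + z2)" using h by (simp add: algebra_simps)
  moreover have cE: "(\<lambda>x. c1 x + c2 x) \<in> Eops sm g" using h(1,4) by (rule Eops.Eadd)
  moreover have zS: "z1 + z2 \<in> Espan sm g Z" using h(2,5) by (rule Espan.Sadd)
  ultimately show ?case by (intro bexI[OF _ cE] bexI[OF _ zS])
next
  case (Sapp a u)
  then obtain c z where h: "c \<in> Eops sm g" "z \<in> Espan sm g Z" "u = c y + z" by blast
  have "a u = (a \<circ> c) y + a z" using h lin_add[OF E_lin[OF rm comm g Sapp.hyps(1)]] by simp
  moreover have "a \<circ> c \<in> Eops sm g" using h(1) Sapp.hyps(1) by (rule Eops.Ecomp[rotated])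
  moreover have "a z \<in> Espan sm g Z" using Sapp.hyps(1) h(2) by (rule Espan.Sapp)
  ultimately show ?case by blast
qed

lemma fg_core:
  fixes sm :: "'r::ring_1 \<Rightarrow> 'v::ab_group_add \<Rightarrow> 'v" and g :: "'v \<Rightarrow> 'v"
  assumes rm: "rmodule sm" and comm: "\<forall>r s::'r::ring_1. r * s = s * r"
    and V: "submodule sm V" and finX: "finite X" and XV: "X \<subseteq> V"
    and span: "\<forall>N. submodule sm N \<and> X \<subseteq> N \<longrightarrow> V \<subseteq> N"
    and g: "lin sm g" and surj: "\<forall>x\<in>V. \<exists>u\<in>V. g u = x"
  shows "\<exists>a\<in>Eops sm g. \<forall>x\<in>V. x = a (g x)"
proof -
  let ?E = "Eops sm g"
  let ?S = "Espan sm g"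
  have linE: "\<And>a. a \<in> ?E \<Longrightarrow> lin sm a" using E_lin[OF rm comm g] by blast
  have Eg: "\<And>a x. a \<in> ?E \<Longrightarrow> a (g x) = g (a x)" using E_g[OF rm comm g] by blast
  have Ec: "\<And>a b x. a \<in> ?E \<Longrightarrow> b \<in> ?E \<Longrightarrow> a (b x) = b (a x)" using E_comm[OF rm comm g] by blast
  have Sdiff: "\<And>Y u v. u \<in> ?S Y \<Longrightarrow> v \<in> ?S Y \<Longrightarrow> u - v \<in> ?S Y"
    using submod_diff[OF rm Espan_submod] by blast
  have main: "\<exists>a\<in>?E. \<forall>x\<in>V. x - a (g x) \<in> ?S (X - Y)" if "Y \<subseteq> X" for Y
    using finite_subset[OF that finX] that
  proof (induction Y rule: finite_subset_induct)
    case empty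
    have "V \<subseteq> ?S X" using span Espan_submod by (blast intro: Espan.Sb)
    moreover have "x - sm 0 (g x) = x" for x using rm_zero2[OF rm] by simp
    ultimately have "\<forall>x\<in>V. x - sm 0 (g x) \<in> ?S (X - {})" by auto
    then show ?case using Eops.Esm by blast
  next
    case (insert y Y)
    define Z where "Z = X - insert y Y"
    have XY: "X - Y = insert y Z" unfolding Z_def using insert by auto
    obtain a where a: "a \<in> ?E" "\<forall>x\<in>V. x - a (g x) \<in> ?S (insert y Z)"
      using insert.IH XY by auto
    have yV: "y \<in> V" using insert XV by blast
    obtain u where u: "u \<in> V" "g u = y" using surj yV by blast
    obtain c z where cz: "c \<in> ?E" "z \<in> ?S Z" "u - a (g u) = c y + z"
      using Espan_decomp[OF rm comm g] a u(1) by blast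
    have "g (u - a (g u)) = y - a (g y)"
      using u lin_diff[OF g] Eg[OF a(1)] by simp
    moreover have "g (c y + z) = c (g y) + g z" using lin_add[OF g] Eg[OF cz(1)] by simp
    ultimately have e1: "y - a (g y) - c (g y) = g z" using cz(3) by (simp add: algebra_simps)
    define a' where "a' = (\<lambda>x. a x + c x)"
    have a'E: "a' \<in> ?E" unfolding a'_def using a(1) cz(1) by (rule Eops.Eadd)
    have ty: "y - a' (g y) \<in> ?S Z"
    proof -
      have "y - a' (g y) = g z" using e1 unfolding a'_def by (simp add: algebra_simps)
      then show ?thesis using Espan.Sapp[OF Eops.Eg cz(2)] by simp
    qed
    define a'' where "a'' = (\<lambda>w. a w + a' w + sm (-1) (a' (a (g w))))"
    have a''E: "a'' \<in> ?E"
    proof -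
      have "(\<lambda>w. a w + a' w) \<in> ?E" using a(1) a'E by (rule Eops.Eadd)
      moreover have "sm (-1) \<circ> (a' \<circ> (a \<circ> g)) \<in> ?E"
        by (rule Eops.Ecomp[OF Eops.Esm Eops.Ecomp[OF a'E Eops.Ecomp[OF a(1) Eops.Eg]]])
      ultimately have "(\<lambda>w. (\<lambda>w. a w + a' w) w + (sm (-1) \<circ> (a' \<circ> (a \<circ> g))) w) \<in> ?E"
        by (rule Eops.Eadd)
      then show ?thesis by (rule E_eq) (simp add: a''_def)
    qed
    have "\<forall>x\<in>V. x - a'' (g x) \<in> ?S (X - insert y Y)"
    proof
      fix x assume x: "x \<in> V"
      define v where "v = x - a (g x)"
      have vS: "v \<in> ?S (insert y Z)" using a x unfolding v_def by blast
      have eq: "x - a'' (g x) = v - a' (g v)"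
      proof -
        have h1: "a' (g v) = a' (g x) - a' (a (g (g x)))"
          unfolding v_def using lin_diff[OF g] lin_diff[OF linE[OF a'E]] Eg[OF a(1)] by simp
        have h2: "a'' (g x) = a (g x) + a' (g x) - a' (a (g (g x)))"
          unfolding a''_def using rm_neg[OF rm] by simp
        show ?thesis by (subst h1, subst h2, simp add: v_def algebra_simps)
      qed
      obtain e z' where ez: "e \<in> ?E" "z' \<in> ?S Z" "v = e y + z'"
        using Espan_decomp[OF rm comm g vS] by blast
      have t1: "e y - a' (g (e y)) = e (y - a' (g y))"
        using lin_diff[OF linE[OF ez(1)]] Eg[OF ez(1), symmetric] Ec[OF a'E ez(1)] by simp
      have t1S: "e y - a' (g (e y)) \<in> ?S Z" unfolding t1 using ez(1) ty by (rule Espan.Sapp)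
      have t2S: "z' - a' (g z') \<in> ?S Z"
      proof -
        have "a' \<circ> g \<in> ?E" by (rule Eops.Ecomp[OF a'E Eops.Eg])
        then have "(a' \<circ> g) z' \<in> ?S Z" using ez(2) by (rule Espan.Sapp)
        then show ?thesis using Sdiff ez(2) by simp
      qed
      have "v - a' (g v) = (e y - a' (g (e y))) + (z' - a' (g z'))"
        unfolding ez(3) using lin_add[OF g] lin_add[OF linE[OF a'E]] by simp
      then have "v - a' (g v) \<in> ?S Z" using t1S t2S by (simp add: Espan.Sadd)
      then show "x - a'' (g x) \<in> ?S (X - insert y Y)" unfolding eq Z_def .
    qed
    then show ?case using a''E by blast
  qed
  obtain a where a: "a \<in> ?E" "\<forall>x\<in>V. x - a (g x) \<in> ?S {}" using main[of X] by auto
  have "\<forall>x\<in>V. x = a (g x)"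
  proof
    fix x assume "x \<in> V"
    then have "x - a (g x) = 0" using a Espan_empty[OF rm comm g] by blast
    then show "x = a (g x)" by simp
  qed
  then show ?thesis using a(1) by blast
qed



lemma inj_core:
  assumes rm: "rmodule sm" and V: "submodule sm V"
    and f: "lin sm f" and g: "lin sm g" and fV: "f ` V \<subseteq> V" and gV: "g ` V \<subseteq> V"
    and gf: "\<forall>x\<in>V. g (f x) = x" and inj0: "\<forall>x\<in>V. g x = 0 \<longrightarrow> x = 0"
  shows "\<forall>x\<in>V. f (g x) = x"
proof
  fix x assume x: "x \<in> V"
  have gx: "g x \<in> V" using x gV by blast
  have fgx: "f (g x) \<in> V" using gx fV by blast
  have "g (f (g x) - x) = 0" using gf gx by (simp add: lin_diff[OF g])
  moreover have "f (g x) - x \<in> V" using submod_diff[OF rm V fgx x] .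
  ultimately have "f (g x) - x = 0" using inj0 by blast
  then show "f (g x) = x" by simp
qed

lemma restr_supp: "supported_in M (restr M x)"
  unfolding supported_in_def restr_def by simp

lemma restr_id: "supported_in M x \<Longrightarrow> restr M x = x"
  unfolding supported_in_def restr_def by (auto simp: fun_eq_iff)

lemma shift0: "shift 0 c = c"
  unfolding shift_def by simp

lemma ca_lin:
  assumes rm: "rmodule sm" and ca: "CA_Rmod sm \<tau>"
  shows "lin (smV sm) \<tau>"
proof -
  obtain M \<mu> where M: "finite M" "\<forall>c g. \<tau> c g = \<mu> (restr M (shift (- g) c))"
    "\<forall>x y. supported_in M x \<longrightarrow> supported_in M y \<longrightarrow> \<mu> (\<lambda>h. x h + y h) = \<mu> x + \<mu> y"
    "\<forall>r x. supported_in M x \<longrightarrow> \<mu> (\<lambda>h. sm r (x h)) = sm r (\<mu> x)"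
    using ca unfolding CA_Rmod_def by blast
  have add: "\<tau> (c + d) = \<tau> c + \<tau> d" for c d
  proof
    fix g
    have "restr M (shift (- g) (c + d)) = (\<lambda>h. restr M (shift (- g) c) h + restr M (shift (- g) d) h)"
      unfolding restr_def shift_def by (auto simp: fun_eq_iff)
    then show "\<tau> (c + d) g = (\<tau> c + \<tau> d) g"
      using M(2) M(3)[rule_format, OF restr_supp restr_supp] by simp
  qed
  have smul: "\<tau> (smV sm r c) = smV sm r (\<tau> c)" for r c
  proof
    fix g
    have "restr M (shift (- g) (smV sm r c)) = (\<lambda>h. sm r (restr M (shift (- g) c) h))"
      unfolding restr_def shift_def smV_def by (auto simp: fun_eq_iff rm_zero1[OF rm])
    then show "\<tau> (smV sm r c) g = smV sm r (\<tau> c) g"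
      using M(2) M(4)[rule_format, OF restr_supp] by (simp add: smV_def)
  qed
  show ?thesis unfolding lin_def using add smul by blast
qed

lemma ca_shift:
  assumes "\<forall>c g. \<tau> c g = \<mu> (restr M (shift (- g) c))"
  shows "\<tau> (\<lambda>h. c (g + h)) x = \<tau> c (g + x)"
proof -
  have "shift (- x) (\<lambda>h. c (g + h)) = shift (- (g + x)) c"
    unfolding shift_def by (simp add: add.assoc)
  then show ?thesis using assms by simp
qed

lemma part1:
  fixes sm :: "'r::ring_1 \<Rightarrow> 'a::ab_group_add \<Rightarrow> 'a" and \<tau> :: "('g::group_add \<Rightarrow> 'a) \<Rightarrow> ('g \<Rightarrow> 'a)"
  assumes rm: "rmodule sm" and ca: "CA_Rmod sm \<tau>" and rev: "reversible \<tau>"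
  shows "CA_Rmod sm (inv_into UNIV \<tau>)"
proof -
  let ?i = "inv_into UNIV \<tau>"
  have bij: "bij \<tau>" using rev unfolding reversible_def by blast
  have l: "lin (smV sm) \<tau>" using ca_lin[OF rm ca] .
  have fi: "\<tau> (?i c) = c" for c using bij by (simp add: bij_is_surj surj_f_inv_f)
  have if_: "?i (\<tau> c) = c" for c using bij by (simp add: bij_is_inj inv_f_f)
  have iadd: "?i (c + d) = ?i c + ?i d" for c d
  proof -
    have "\<tau> (?i c + ?i d) = c + d" using lin_add[OF l] fi by simp
    then show ?thesis using if_ by metis
  qed
  have ism: "?i (smV sm r c) = smV sm r (?i c)" for r c
  proof -
    have "\<tau> (smV sm r (?i c)) = smV sm r c" using lin_sm[OF l] fi by simp
    then show ?thesis using if_ by metis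
  qed
  obtain M \<mu> where M: "finite M" "\<forall>c g. ?i c g = \<mu> (restr M (shift (- g) c))"
    using rev unfolding reversible_def is_CA_def by blast
  have mu0: "\<mu> x = ?i x 0" if "supported_in M x" for x :: "'g \<Rightarrow> 'a"
  proof -
    have "shift (- 0) x = x" unfolding shift_def by simp
    then show ?thesis using M(2)[rule_format, of x 0] restr_id[OF that] by simp
  qed
  have supp_add: "supported_in M (\<lambda>h. x h + y h)" if "supported_in M x" "supported_in M y" for x y :: "'g \<Rightarrow> 'a"
    using that unfolding supported_in_def by simp
  have supp_sm: "supported_in M (\<lambda>h. sm r (x h))" if "supported_in M x" for r and x :: "'g \<Rightarrow> 'a"
    using that rm_zero1[OF rm] unfolding supported_in_def by simp
  have "\<forall>x y. supported_in M x \<longrightarrow> supported_in M y \<longrightarrow> \<mu> (\<lambda>h. x h + y h) = \<mu> x + \<mu> y"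
  proof (intro allI impI)
    fix x y :: "'g \<Rightarrow> 'a" assume xy: "supported_in M x" "supported_in M y"
    have "\<mu> (\<lambda>h. x h + y h) = ?i (x + y) 0" using mu0[OF supp_add[OF xy]]
      by (simp add: plus_fun_def)
    also have "\<dots> = \<mu> x + \<mu> y" using iadd mu0 xy by simp
    finally show "\<mu> (\<lambda>h. x h + y h) = \<mu> x + \<mu> y" .
  qed
  moreover have "\<forall>r x. supported_in M x \<longrightarrow> \<mu> (\<lambda>h. sm r (x h)) = sm r (\<mu> x)"
  proof (intro allI impI)
    fix r and x :: "'g \<Rightarrow> 'a" assume x: "supported_in M x"
    have "\<mu> (\<lambda>h. sm r (x h)) = ?i (smV sm r x) 0" using mu0[OF supp_sm[OF x]]
      by (simp add: smV_def)
    also have "\<dots> = sm r (\<mu> x)" using ism mu0 x by (simp add: smV_def)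
    finally show "\<mu> (\<lambda>h. sm r (x h)) = sm r (\<mu> x)" .
  qed
  ultimately show ?thesis unfolding CA_Rmod_def using M by blast
qed



lemma restr_cong: "(\<And>m. m \<in> M \<Longrightarrow> f m = f' m) \<Longrightarrow> restr M f = restr M f'"
  unfolding restr_def by (auto simp: fun_eq_iff)

lemma shift_neg: "shift (- g) c = (\<lambda>h. c (g + h))"
  unfolding shift_def by simp

lemma loc_lin:
  fixes sm :: "'r::ring_1 \<Rightarrow> 'a::ab_group_add \<Rightarrow> 'a" and \<mu> :: "('g \<Rightarrow> 'a) \<Rightarrow> 'a"
    and P :: "nat \<Rightarrow> 'g \<Rightarrow> nat"
  assumes rm: "rmodule sm"
    and add: "\<forall>x y. supported_in M x \<longrightarrow> supported_in M y \<longrightarrow> \<mu> (\<lambda>h. x h + y h) = \<mu> x + \<mu> y"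
    and smul: "\<forall>r x. supported_in M x \<longrightarrow> \<mu> (\<lambda>h. sm r (x h)) = sm r (\<mu> x)"
  shows "lin (smV sm) (\<lambda>d h. if h \<in> K then \<mu> (restr M (\<lambda>m. d (P h m))) else 0)"
proof -
  let ?T = "\<lambda>(d::nat \<Rightarrow> 'a) h. if h \<in> K then \<mu> (restr M (\<lambda>m. d (P h m))) else 0"
  have "?T (d + e) = ?T d + ?T e" for d e
  proof
    fix h
    have "restr M (\<lambda>m. (d + e) (P h m)) = (\<lambda>m. restr M (\<lambda>m. d (P h m)) m + restr M (\<lambda>m. e (P h m)) m)"
      unfolding restr_def by (auto simp: fun_eq_iff)
    then show "?T (d + e) h = (?T d + ?T e) h"
      using add[rule_format, OF restr_supp restr_supp] by simp
  qed
  moreover have "?T (smV sm r d) = smV sm r (?T d)" for r d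
  proof
    fix h
    have "restr M (\<lambda>m. smV sm r d (P h m)) = (\<lambda>m. sm r (restr M (\<lambda>m. d (P h m)) m))"
      unfolding restr_def smV_def by (auto simp: fun_eq_iff rm_zero1[OF rm])
    then show "?T (smV sm r d) h = smV sm r (?T d) h"
      using smul[rule_format, OF restr_supp] by (simp add: smV_def rm_zero1[OF rm])
  qed
  ultimately show ?thesis unfolding lin_def by blast
qed

lemma part2:
  fixes smul :: "'r::ring_1 \<Rightarrow> 'a::ab_group_add \<Rightarrow> 'a"
    and \<sigma> \<tau> :: "('g::group_add \<Rightarrow> 'a) \<Rightarrow> ('g \<Rightarrow> 'a)"
  assumes lef: "LEF TYPE('g)" and rm: "rmodule smul"
    and cs: "CA_Rmod smul \<sigma>" and ct: "CA_Rmod smul \<tau>" and st: "\<sigma> \<circ> \<tau> = id"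
    and core: "\<forall>K (f::(nat \<Rightarrow> 'a) \<Rightarrow> (nat \<Rightarrow> 'a)) g. finite K \<longrightarrow> lin (smV smul) f \<longrightarrow>
       lin (smV smul) g \<longrightarrow> f ` VK K \<subseteq> VK K \<longrightarrow> g ` VK K \<subseteq> VK K \<longrightarrow>
       (\<forall>x\<in>VK K. g (f x) = x) \<longrightarrow> (\<forall>x\<in>VK K. f (g x) = x)"
  shows "\<tau> \<circ> \<sigma> = id"
proof -
  obtain Ms \<mu>s where Ms: "finite Ms" "\<forall>c g. \<sigma> c g = \<mu>s (restr Ms (shift (- g) c))"
    "\<forall>x y. supported_in Ms x \<longrightarrow> supported_in Ms y \<longrightarrow> \<mu>s (\<lambda>h. x h + y h) = \<mu>s x + \<mu>s y"
    "\<forall>r x. supported_in Ms x \<longrightarrow> \<mu>s (\<lambda>h. smul r (x h)) = smul r (\<mu>s x)"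
    using cs[unfolded CA_Rmod_def] by blast
  obtain Mt \<mu>t where Mt: "finite Mt" "\<forall>c g. \<tau> c g = \<mu>t (restr Mt (shift (- g) c))"
    "\<forall>x y. supported_in Mt x \<longrightarrow> supported_in Mt y \<longrightarrow> \<mu>t (\<lambda>h. x h + y h) = \<mu>t x + \<mu>t y"
    "\<forall>r x. supported_in Mt x \<longrightarrow> \<mu>t (\<lambda>h. smul r (x h)) = smul r (\<mu>t x)"
    using ct[unfolded CA_Rmod_def] by blast
  define S where "S = insert 0 (Ms \<union> Mt \<union> (\<lambda>(a, b). a + b) ` (Ms \<times> Mt) \<union> (\<lambda>(a, b). a + b) ` (Mt \<times> Ms))"
  have finS: "finite S" unfolding S_def using Ms(1) Mt(1) by simp
  obtain H :: "nat monoid" and \<phi> :: "'g \<Rightarrow> nat" where H: "group H" "finite (carrier H)"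
    "\<phi> ` S \<subseteq> carrier H" "inj_on \<phi> S"
    "\<forall>a\<in>S. \<forall>b\<in>S. a + b \<in> S \<longrightarrow> \<phi> (a + b) = \<phi> a \<otimes>\<^bsub>H\<^esub> \<phi> b"
    using lef[unfolded LEF_def, rule_format, OF finS] by blast
  define K where "K = carrier H"
  interpret G: group H by (rule H(1))
  have S0: "0 \<in> S" and SMs: "\<And>m. m \<in> Ms \<Longrightarrow> m \<in> S" and SMt: "\<And>m. m \<in> Mt \<Longrightarrow> m \<in> S"
    and Sst: "\<And>a b. a \<in> Ms \<Longrightarrow> b \<in> Mt \<Longrightarrow> a + b \<in> S"
    and Sts: "\<And>a b. a \<in> Mt \<Longrightarrow> b \<in> Ms \<Longrightarrow> a + b \<in> S"
    unfolding S_def by force+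
  have phiK: "\<And>x. x \<in> S \<Longrightarrow> \<phi> x \<in> K" using H(3) unfolding K_def by blast
  have hom: "\<And>a b. a \<in> S \<Longrightarrow> b \<in> S \<Longrightarrow> a + b \<in> S \<Longrightarrow> \<phi> (a + b) = \<phi> a \<otimes>\<^bsub>H\<^esub> \<phi> b"
    using H(5) by blast
  have phi0: "\<phi> 0 = \<one>\<^bsub>H\<^esub>"
  proof -
    have "\<phi> 0 = \<phi> 0 \<otimes>\<^bsub>H\<^esub> \<phi> 0" using hom[OF S0 S0] S0 by simp
    then show ?thesis using phiK[OF S0] unfolding K_def by simp
  qed
  define TH where "TH = (\<lambda>(d::nat \<Rightarrow> 'a) h. if h \<in> K then \<mu>t (restr Mt (\<lambda>m. d (h \<otimes>\<^bsub>H\<^esub> \<phi> m))) else 0)"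
  define SH where "SH = (\<lambda>(d::nat \<Rightarrow> 'a) h. if h \<in> K then \<mu>s (restr Ms (\<lambda>m. d (h \<otimes>\<^bsub>H\<^esub> \<phi> m))) else 0)"
  have linT: "lin (smV smul) TH" unfolding TH_def by (rule loc_lin[OF rm Mt(3) Mt(4)])
  have linS: "lin (smV smul) SH" unfolding SH_def by (rule loc_lin[OF rm Ms(3) Ms(4)])
  have TV: "TH ` VK K \<subseteq> VK K" unfolding TH_def VK_def by auto
  have SV: "SH ` VK K \<subseteq> VK K" unfolding SH_def VK_def by auto
  have finK: "finite K" using H(2) unfolding K_def .
  have sig_tau: "\<sigma> (\<tau> c) = c" for c using st by (simp add: fun_eq_iff)
  have tau_at: "\<tau> c m = \<mu>t (restr Mt (\<lambda>m'. c (m + m')))" for c m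
    using Mt(2) by (simp add: shift_neg)
  have sig_at: "\<sigma> c m = \<mu>s (restr Ms (\<lambda>m'. c (m + m')))" for c m
    using Ms(2) by (simp add: shift_neg)
  have ST: "\<forall>x\<in>VK K. SH (TH x) = x"
  proof
    fix d :: "nat \<Rightarrow> 'a" assume d: "d \<in> VK K"
    show "SH (TH d) = d"
    proof
      fix h
      show "SH (TH d) h = d h"
      proof (cases "h \<in> K")
        case False
        then show ?thesis using d unfolding SH_def VK_def by simp
      next
        case hK: True
        define c :: "'g \<Rightarrow> 'a" where "c = (\<lambda>x. if x \<in> S then d (h \<otimes>\<^bsub>H\<^esub> \<phi> x) else 0)"
        have "SH (TH d) h = \<mu>s (restr Ms (\<lambda>m. TH d (h \<otimes>\<^bsub>H\<^esub> \<phi> m)))"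
          using hK unfolding SH_def by simp
        also have "\<dots> = \<mu>s (restr Ms (\<lambda>m. \<tau> c m))"
        proof (rule arg_cong[where f=\<mu>s], rule restr_cong)
          fix m assume m: "m \<in> Ms"
          have hm: "h \<otimes>\<^bsub>H\<^esub> \<phi> m \<in> K" using hK phiK[OF SMs[OF m]] unfolding K_def by simp
          have "TH d (h \<otimes>\<^bsub>H\<^esub> \<phi> m) = \<mu>t (restr Mt (\<lambda>m'. d (h \<otimes>\<^bsub>H\<^esub> \<phi> m \<otimes>\<^bsub>H\<^esub> \<phi> m')))"
            using hm unfolding TH_def by simp
          also have "\<dots> = \<mu>t (restr Mt (\<lambda>m'. c (m + m')))"
          proof (rule arg_cong[where f=\<mu>t], rule restr_cong)
            fix m' assume m': "m' \<in> Mt"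
            have "\<phi> (m + m') = \<phi> m \<otimes>\<^bsub>H\<^esub> \<phi> m'" using hom[OF SMs[OF m] SMt[OF m'] Sst[OF m m']] .
            then show "d (h \<otimes>\<^bsub>H\<^esub> \<phi> m \<otimes>\<^bsub>H\<^esub> \<phi> m') = c (m + m')"
              unfolding c_def using Sst[OF m m'] hK phiK[OF SMs[OF m]] phiK[OF SMt[OF m']]
              unfolding K_def by (simp add: G.m_assoc)
          qed
          also have "\<dots> = \<tau> c m" using tau_at by simp
          finally show "TH d (h \<otimes>\<^bsub>H\<^esub> \<phi> m) = \<tau> c m" .
        qed
        also have "\<dots> = \<sigma> (\<tau> c) 0" using sig_at by simp
        also have "\<dots> = c 0" using sig_tau by simp
        also have "\<dots> = d h" unfolding c_def using S0 phi0 hK unfolding K_def by simp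
        finally show ?thesis .
      qed
    qed
  qed
  have TS: "\<forall>x\<in>VK K. TH (SH x) = x" using core[rule_format, OF finK linT linS TV SV ST[rule_format]] by blast
  have at0: "\<tau> (\<sigma> c) 0 = c 0" for c :: "'g \<Rightarrow> 'a"
  proof -
    define d :: "nat \<Rightarrow> 'a" where "d = (\<lambda>y. if y \<in> \<phi> ` S then c (inv_into S \<phi> y) else 0)"
    have dV: "d \<in> VK K" unfolding d_def VK_def using phiK by auto
    have dphi: "d (\<phi> x) = c x" if "x \<in> S" for x
      unfolding d_def using that H(4) by (simp add: inv_into_f_f)
    have oneK: "\<one>\<^bsub>H\<^esub> \<in> K" unfolding K_def by simp
    have "c 0 = d (\<one>\<^bsub>H\<^esub>)" using dphi[OF S0] phi0 by simp
    also have "\<dots> = TH (SH d) (\<one>\<^bsub>H\<^esub>)" using TS dV by simp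
    also have "\<dots> = \<mu>t (restr Mt (\<lambda>m. SH d (\<one>\<^bsub>H\<^esub> \<otimes>\<^bsub>H\<^esub> \<phi> m)))"
      using oneK unfolding TH_def by simp
    also have "\<dots> = \<mu>t (restr Mt (\<lambda>m. \<sigma> c m))"
    proof (rule arg_cong[where f=\<mu>t], rule restr_cong)
      fix m assume m: "m \<in> Mt"
      have pm: "\<phi> m \<in> K" using phiK[OF SMt[OF m]] .
      then have "SH d (\<one>\<^bsub>H\<^esub> \<otimes>\<^bsub>H\<^esub> \<phi> m) = \<mu>s (restr Ms (\<lambda>m'. d (\<phi> m \<otimes>\<^bsub>H\<^esub> \<phi> m')))"
        unfolding SH_def K_def by simp
      also have "\<dots> = \<mu>s (restr Ms (\<lambda>m'. c (m + m')))"
      proof (rule arg_cong[where f=\<mu>s], rule restr_cong)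
        fix m' assume m': "m' \<in> Ms"
        have "\<phi> (m + m') = \<phi> m \<otimes>\<^bsub>H\<^esub> \<phi> m'" using hom[OF SMt[OF m] SMs[OF m'] Sts[OF m m']] .
        then show "d (\<phi> m \<otimes>\<^bsub>H\<^esub> \<phi> m') = c (m + m')" using dphi[OF Sts[OF m m']] by simp
      qed
      also have "\<dots> = \<sigma> c m" using sig_at by simp
      finally show "SH d (\<one>\<^bsub>H\<^esub> \<otimes>\<^bsub>H\<^esub> \<phi> m) = \<sigma> c m" .
    qed
    also have "\<dots> = \<tau> (\<sigma> c) 0" using tau_at by simp
    finally show ?thesis by simp
  qed
  have "\<tau> (\<sigma> c) g = c g" for c :: "'g \<Rightarrow> 'a" and g
  proof -
    have e1: "\<sigma> (\<lambda>h. c (g + h)) = (\<lambda>x. \<sigma> c (g + x))"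
      using ca_shift[OF Ms(2)] by (simp add: fun_eq_iff)
    have "\<tau> (\<sigma> c) g = \<tau> (\<lambda>h. \<sigma> c (g + h)) 0" using ca_shift[OF Mt(2), of "\<sigma> c" g 0] by simp
    also have "\<dots> = \<tau> (\<sigma> (\<lambda>h. c (g + h))) 0" using e1 by simp
    also have "\<dots> = c g" using at0 by simp
    finally show ?thesis .
  qed
  then show ?thesis by (simp add: fun_eq_iff)
qed



lemma VK_span:
  fixes sm :: "'r::ring_1 \<Rightarrow> 'a::ab_group_add \<Rightarrow> 'a"
  assumes rm: "rmodule sm" and ms: "mspan sm S0 = UNIV" and N: "submodule (smV sm) N"
    and X: "\<forall>k\<in>K. \<forall>a\<in>S0. (\<lambda>h. if h = k then a else 0) \<in> N"
  shows "finite K' \<Longrightarrow> K' \<subseteq> K \<Longrightarrow> VK K' \<subseteq> N"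
proof (induction K' rule: finite_induct)
  case empty
  have "VK {} = {0::nat \<Rightarrow> 'a}" unfolding VK_def by (auto simp: fun_eq_iff)
  then show ?case using N unfolding submodule_def by simp
next
  case (insert k K')
  show ?case
  proof
    fix x :: "nat \<Rightarrow> 'a" assume x: "x \<in> VK (insert k K')"
    define \<delta> where "\<delta> = (\<lambda>a::'a. (\<lambda>h::nat. if h = k then a else 0))"
    define B where "B = {a. \<delta> a \<in> N}"
    have Nc: "0 \<in> N" "\<And>x y. x \<in> N \<Longrightarrow> y \<in> N \<Longrightarrow> x + y \<in> N"
      "\<And>r x. x \<in> N \<Longrightarrow> smV sm r x \<in> N" using N unfolding submodule_def by auto
    have "submodule sm B"
    proof -
      have "\<delta> 0 = 0" unfolding \<delta>_def by (simp add: fun_eq_iff)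
      then have "0 \<in> B" unfolding B_def using Nc(1) by simp
      moreover have "a + b \<in> B" if "a \<in> B" "b \<in> B" for a b
      proof -
        have "\<delta> (a + b) = \<delta> a + \<delta> b" unfolding \<delta>_def by (simp add: fun_eq_iff)
        then show ?thesis using that Nc(2) unfolding B_def by simp
      qed
      moreover have "sm r a \<in> B" if "a \<in> B" for r a
      proof -
        have "\<delta> (sm r a) = smV sm r (\<delta> a)" unfolding \<delta>_def smV_def
          by (simp add: fun_eq_iff rm_zero1[OF rm])
        then show ?thesis using that Nc(3) unfolding B_def by simp
      qed
      ultimately show ?thesis unfolding submodule_def by blast
    qed
    moreover have "S0 \<subseteq> B" unfolding B_def \<delta>_def using X insert.prems by blast
    ultimately have "mspan sm S0 \<subseteq> B" unfolding mspan_def by blast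
    then have d: "\<delta> (x k) \<in> N" using ms unfolding B_def by blast
    have "x(k := 0) \<in> VK K'" using x unfolding VK_def by auto
    then have r: "x(k := 0) \<in> N" using insert.IH insert.prems by blast
    have "x = \<delta> (x k) + x(k := 0)" unfolding \<delta>_def by (simp add: fun_eq_iff)
    then show "x \<in> N" using Nc(2)[OF d r] by simp
  qed
qed

lemma core_noeth:
  fixes smul :: "'r::ring_1 \<Rightarrow> 'a::ab_group_add \<Rightarrow> 'a"
  assumes rm: "rmodule smul" and noe: "noetherian_module smul" and finK: "finite K"
    and f: "lin (smV smul) f" and g: "lin (smV smul) g" and fV: "f ` VK K \<subseteq> VK K"
    and gV: "g ` VK K \<subseteq> VK K" and gf: "\<forall>x\<in>VK K. g (f x) = x"
  shows "\<forall>x\<in>VK K. f (g x) = x"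
  by (rule noeth_core[OF rmodule_smV[OF rm] submodule_VK[OF rm] noeth_VK[OF rm noe finK] f g fV gV gf])

lemma core_artin:
  fixes smul :: "'r::ring_1 \<Rightarrow> 'a::ab_group_add \<Rightarrow> 'a"
  assumes rm: "rmodule smul" and art: "artinian_module smul" and finK: "finite K"
    and f: "lin (smV smul) f" and g: "lin (smV smul) g" and fV: "f ` VK K \<subseteq> VK K"
    and gV: "g ` VK K \<subseteq> VK K" and gf: "\<forall>x\<in>VK K. g (f x) = x"
  shows "\<forall>x\<in>VK K. f (g x) = x"
  by (rule artin_core[OF rmodule_smV[OF rm] submodule_VK[OF rm] artin_VK[OF rm art finK] f g fV gV gf])

lemma core_fg:
  fixes smul :: "'r::ring_1 \<Rightarrow> 'a::ab_group_add \<Rightarrow> 'a"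
    and f g :: "(nat \<Rightarrow> 'a) \<Rightarrow> (nat \<Rightarrow> 'a)"
  assumes rm: "rmodule smul" and comm: "\<forall>r s :: 'r. r * s = s * r"
    and fg: "fin_gen_module smul" and finK: "finite K"
    and f: "lin (smV smul) f" and g: "lin (smV smul) g" and fV: "f ` VK K \<subseteq> VK K"
    and gV: "g ` VK K \<subseteq> VK K" and gf: "\<forall>x\<in>VK K. g (f x) = x"
  shows "\<forall>x\<in>VK K. f (g x) = x"
proof -
  obtain S0 where S0: "finite S0" "mspan smul S0 = UNIV" using fg unfolding fin_gen_module_def by blast
  define X where "X = (\<lambda>(k, a). (\<lambda>h::nat. if h = k then a else (0::'a))) ` (K \<times> S0)"
  have finX: "finite X" unfolding X_def using finK S0(1) by simp
  have XV: "X \<subseteq> VK K" unfolding X_def VK_def by auto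
  have span: "\<forall>N. submodule (smV smul) N \<and> X \<subseteq> N \<longrightarrow> VK K \<subseteq> N"
  proof (intro allI impI)
    fix N assume N: "submodule (smV smul) N \<and> X \<subseteq> N"
    have "\<forall>k\<in>K. \<forall>a\<in>S0. (\<lambda>h. if h = k then a else 0) \<in> N" using N unfolding X_def by blast
    then show "VK K \<subseteq> N" using VK_span[OF rm S0(2) conjunct1[OF N] _ finK] by blast
  qed
  have surj: "\<forall>x\<in>VK K. \<exists>u\<in>VK K. g u = x" using gf fV by blast
  obtain a where a: "a \<in> Eops (smV smul) g" "\<forall>x\<in>VK K. x = a (g x)"
    using fg_core[OF rmodule_smV[OF rm] comm submodule_VK[OF rm] finX XV span g surj] by blast
  have la: "lin (smV smul) a" using E_lin[OF rmodule_smV[OF rm] comm g a(1)] .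
  have inj0: "\<forall>x\<in>VK K. g x = 0 \<longrightarrow> x = 0"
  proof (intro ballI impI)
    fix x assume "x \<in> VK K" "g x = 0"
    then show "x = 0" using a(2) lin_zero[OF la] by metis
  qed
  show ?thesis by (rule inj_core[OF rmodule_smV[OF rm] submodule_VK[OF rm] f g fV gV gf inj0])
qed

theorem corollary7p1:
  fixes smul :: "'r::ring_1 \<Rightarrow> 'a::ab_group_add \<Rightarrow> 'a"
    and \<sigma> \<tau> :: "('g::group_add \<Rightarrow> 'a) \<Rightarrow> ('g \<Rightarrow> 'a)"
  assumes "LEF TYPE('g)"
    and "rmodule smul"
    and "CA_Rmod smul \<sigma>"
    and "CA_Rmod smul \<tau>"
  shows "(noetherian_module smul \<and> reversible \<tau> \<longrightarrow> CA_Rmod smul (inv_into UNIV \<tau>))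
    \<and> (\<sigma> \<circ> \<tau> = id \<and>
         (noetherian_module smul \<or> artinian_module smul \<or>
          ((\<forall>r s :: 'r. r * s = s * r) \<and> fin_gen_module smul))
       \<longrightarrow> \<tau> \<circ> \<sigma> = id)"
proof (intro conjI impI)
  assume "noetherian_module smul \<and> reversible \<tau>"
  then show "CA_Rmod smul (inv_into UNIV \<tau>)" using part1[OF assms(2) assms(4)] by blast
next
  assume h: "\<sigma> \<circ> \<tau> = id \<and>
         (noetherian_module smul \<or> artinian_module smul \<or>
          ((\<forall>r s :: 'r. r * s = s * r) \<and> fin_gen_module smul))"
  then have st: "\<sigma> \<circ> \<tau> = id" by blast
  from h consider (n) "noetherian_module smul" | (a) "artinian_module smul"
    | (c) "(\<forall>r s :: 'r. r * s = s * r) \<and> fin_gen_module smul" by blast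
  then show "\<tau> \<circ> \<sigma> = id"
  proof cases
    case n
    have cc: "\<forall>K (f::(nat \<Rightarrow> 'a) \<Rightarrow> (nat \<Rightarrow> 'a)) g. finite K \<longrightarrow> lin (smV smul) f \<longrightarrow>
       lin (smV smul) g \<longrightarrow> f ` VK K \<subseteq> VK K \<longrightarrow> g ` VK K \<subseteq> VK K \<longrightarrow>
       (\<forall>x\<in>VK K. g (f x) = x) \<longrightarrow> (\<forall>x\<in>VK K. f (g x) = x)"
    proof (intro allI impI)
      fix K and f g :: "(nat \<Rightarrow> 'a) \<Rightarrow> (nat \<Rightarrow> 'a)"
      assume that: "finite K" "lin (smV smul) f" "lin (smV smul) g"
      "f ` VK K \<subseteq> VK K" "g ` VK K \<subseteq> VK K" "\<forall>x\<in>VK K. g (f x) = x"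
      show "\<forall>x\<in>VK K. f (g x) = x"
      using core_noeth[OF assms(2) n, OF that] .
    qed
    show ?thesis using part2[OF assms st cc] .
  next
    case a
    have cc: "\<forall>K (f::(nat \<Rightarrow> 'a) \<Rightarrow> (nat \<Rightarrow> 'a)) g. finite K \<longrightarrow> lin (smV smul) f \<longrightarrow>
       lin (smV smul) g \<longrightarrow> f ` VK K \<subseteq> VK K \<longrightarrow> g ` VK K \<subseteq> VK K \<longrightarrow>
       (\<forall>x\<in>VK K. g (f x) = x) \<longrightarrow> (\<forall>x\<in>VK K. f (g x) = x)"
    proof (intro allI impI)
      fix K and f g :: "(nat \<Rightarrow> 'a) \<Rightarrow> (nat \<Rightarrow> 'a)"
      assume that: "finite K" "lin (smV smul) f" "lin (smV smul) g"
      "f ` VK K \<subseteq> VK K" "g ` VK K \<subseteq> VK K" "\<forall>x\<in>VK K. g (f x) = x"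
      show "\<forall>x\<in>VK K. f (g x) = x"
      using core_artin[OF assms(2) a, OF that] .
    qed
    show ?thesis using part2[OF assms st cc] .
  next
    case c
    have cc: "\<forall>K (f::(nat \<Rightarrow> 'a) \<Rightarrow> (nat \<Rightarrow> 'a)) g. finite K \<longrightarrow> lin (smV smul) f \<longrightarrow>
       lin (smV smul) g \<longrightarrow> f ` VK K \<subseteq> VK K \<longrightarrow> g ` VK K \<subseteq> VK K \<longrightarrow>
       (\<forall>x\<in>VK K. g (f x) = x) \<longrightarrow> (\<forall>x\<in>VK K. f (g x) = x)"
    proof (intro allI impI)
      fix K and f g :: "(nat \<Rightarrow> 'a) \<Rightarrow> (nat \<Rightarrow> 'a)"
      assume that: "finite K" "lin (smV smul) f" "lin (smV smul) g"
      "f ` VK K \<subseteq> VK K" "g ` VK K \<subseteq> VK K" "\<forall>x\<in>VK K. g (f x) = x"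
      show "\<forall>x\<in>VK K. f (g x) = x"
      using core_fg[OF assms(2) conjunct1[OF c] conjunct2[OF c], OF that] .
    qed
    show ?thesis using part2[OF assms st cc] .
  qed
qed


end
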